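(* Consider binary classification on $\mathcal{X}=\{x\in\mathbb{R}^2:\|x\|\le1\}$ with $x$ uniformly distributed on $\mathcal{X}$ and hypothesis class $\mathcal{H}=\{h_w: h_w(x)=\mathrm{sgn}(x^{\top}w),\ w\in\mathbb{R}^2\}$. Let $g=h_v\in\mathcal{H}$ have parameter $v$, and let $h=h_w$ be sampled with $w\sim\mathcal{N}(v,\sigma^2 I)$. Then for $x_1,x_2\in\mathcal{X}$, $$L(g,x_1)<L(g,x_2)\iff \mathbb{P}[h(x_1)\neq g(x_1)]>\mathbb{P}[h(x_2)\neq g(x_2)].$$
   Context: For $h_1,h_2\in\mathcal{H}$, $\rho(h_1,h_2)=\mathbb{P}_X[h_1(X)\neq h_2(X)]$ with $X$ uniform on $\mathcal{X}$. The least disagree metric is $L(g,x)=\inf_{h\in\mathcal{H}:\,h(x)\neq g(x)}\rho(h,g)$. The probabilities $\mathbb{P}[h(x_k)\neq g(x_k)]$ are over $w\sim\mathcal{N}(v,\sigma^2I)$. *)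

theory Defs
  imports "HOL-Analysis.Analysis" "HOL-Probability.Probability"
begin

definition disk :: "(real^2) set" where
  "disk = cball 0 1"

definition unif_disk :: "(real^2) measure" where
  "unif_disk = uniform_measure lborel disk"

definition hyp :: "real^2 \<Rightarrow> (real^2 \<Rightarrow> real)" where
  "hyp w = (\<lambda>x. sgn (x \<bullet> w))"

definition Hclass :: "(real^2 \<Rightarrow> real) set" where
  "Hclass = range hyp"

definition rho :: "(real^2 \<Rightarrow> real) \<Rightarrow> (real^2 \<Rightarrow> real) \<Rightarrow> real" where
  "rho h1 h2 = measure unif_disk {x \<in> disk. h1 x \<noteq> h2 x}"

text \<open>Least disagree metric; infimum taken in the extended reals (inf of empty set = \<infinity>).\<close>
definition LDM :: "(real^2 \<Rightarrow> real) \<Rightarrow> real^2 \<Rightarrow> ereal" where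
  "LDM g x = (INF h \<in> {h \<in> Hclass. h x \<noteq> g x}. ereal (rho h g))"

definition gauss2 :: "real^2 \<Rightarrow> real \<Rightarrow> (real^2) measure" where
  "gauss2 v \<sigma> = density lborel (\<lambda>w. ennreal (\<Prod>i\<in>UNIV. normal_density (v $ i) \<sigma> (w $ i)))"

definition mis_prob :: "real^2 \<Rightarrow> real \<Rightarrow> real^2 \<Rightarrow> real" where
  "mis_prob v \<sigma> x = measure (gauss2 v \<sigma>) {w. hyp w x \<noteq> hyp v x}"

end

theory Submission
  imports Defs
begin

definition hh :: "real^2 \<Rightarrow> real^2 \<Rightarrow> real^2" where
  "hh n y = y - (2 * (n \<bullet> y)) *\<^sub>R n"
definition perp :: "real^2 \<Rightarrow> real^2" where
  "perp y = (\<chi> i. if i = 1 then - y$2 else y$1)"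

lemma inner2: "(x::real^2) \<bullet> y = x$1 * y$1 + x$2 * y$2"
  by (simp add: inner_vec_def sum_2)
lemma norm2: "norm (x::real^2) ^ 2 = x$1^2 + x$2^2"
  by (metis power2_norm_eq_inner inner2 power2_eq_square)
lemma perp_1[simp]: "perp y $ 1 = - y$2" and perp_2[simp]: "perp y $ 2 = y$1"
  by (simp_all add: perp_def)
lemma decomp:
  assumes "norm e = 1"
  shows "x \<bullet> y = (x \<bullet> e) * (y \<bullet> e) + (x \<bullet> perp e) * (y \<bullet> perp e)"
proof -
  have "e$1^2 + e$2^2 = 1" using assms norm2[of e] by simp
  then show ?thesis unfolding inner2 perp_1 perp_2 by algebra
qed
lemma perp_norm: "norm (perp e) = norm e"
  using norm2[of e] norm2[of "perp e"] by (simp add: power2_eq_square) (metis norm_ge_zero power2_eq_square power2_eq_imp_eq norm2 perp_1 perp_2 power2_minus add.commute)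
lemma perp_orth[simp]: "e \<bullet> perp e = 0" "perp e \<bullet> e = 0"
  by (simp_all add: inner2)
lemma hh_inner: "hh n x \<bullet> y = x \<bullet> hh n y"
  by (simp add: hh_def algebra_simps inner_commute)
lemma hh_hh: "norm n = 1 \<Longrightarrow> hh n (hh n y) = y"
  by (simp add: hh_def algebra_simps inner_commute power2_norm_eq_inner[symmetric] inner_diff_right)
lemma hh_linear: "linear (hh n)"
  unfolding hh_def by (intro linear_compose_sub linear_id) (auto intro!: linearI simp: algebra_simps inner_add_right)
lemma hh_orth: "norm n = 1 \<Longrightarrow> orthogonal_transformation (hh n)"
  unfolding orthogonal_transformation_def using hh_linear hh_inner hh_hh by metis
lemma hh_norm: "norm n = 1 \<Longrightarrow> norm (hh n x) = norm x"
  using hh_orth orthogonal_transformation_norm by blast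
lemma hh_image: "norm n = 1 \<Longrightarrow> hh n ` S = hh n -` S"
  using hh_hh by (auto simp: image_iff) (metis)
definition DD :: "real^2 \<Rightarrow> real^2 \<Rightarrow> (real^2) set" where
  "DD a b = {x \<in> disk. sgn (x \<bullet> a) \<noteq> sgn (x \<bullet> b)}"

lemma disk_sets[measurable]: "disk \<in> sets lborel"
  unfolding disk_def by simp
lemma disk_bounded: "bounded disk" unfolding disk_def by simp

lemma sgn_inner_meas[measurable]: "(\<lambda>x::real^2. sgn (x \<bullet> a)) \<in> borel_measurable borel"
proof -
  have "continuous_on UNIV (\<lambda>x::real^2. x \<bullet> a)" by (intro continuous_intros)
  from measurable_compose[OF borel_measurable_continuous_onI[OF this] borel_measurable_sgn]
  show ?thesis by (simp add: o_def)
qed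
lemma DD_sets[measurable]: "DD a b \<in> sets lborel"
proof -
  have "DD a b = disk \<inter> {x \<in> space borel. sgn (x \<bullet> a) \<noteq> sgn (x \<bullet> b)}" unfolding DD_def by auto
  also have "\<dots> \<in> sets borel" by measurable
  finally show ?thesis by simp
qed
lemma DD_bounded: "bounded (DD a b)"
  by (rule bounded_subset[OF disk_bounded]) (auto simp: DD_def)
lemma lmeas: "S \<in> sets lborel \<Longrightarrow> bounded S \<Longrightarrow> S \<in> lmeasurable"
  by (rule bounded_set_imp_lmeasurable) (auto intro: sets_completionI_sets)
lemma meas_leb: "S \<in> sets lborel \<Longrightarrow> measure lborel S = measure lebesgue S"
  by (rule measure_completion[symmetric])
lemma disk_pos: "0 < measure lborel disk"
proof -
  have "ball (0::real^2) 1 \<subseteq> disk" unfolding disk_def by auto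
  moreover have "\<not> negligible (ball (0::real^2) 1)" by (intro open_not_negligible) auto
  ultimately have "\<not> negligible disk" using negligible_subset by blast
  then have "measure lebesgue disk \<noteq> 0"
    using negligible_iff_measure0 lmeas[OF disk_sets disk_bounded] by blast
  then show ?thesis using meas_leb[OF disk_sets] measure_nonneg[of lborel disk] by linarith
qed
lemma disk_emeas: "emeasure lborel disk \<noteq> 0" "emeasure lborel disk \<noteq> \<infinity>"
proof -
  show "emeasure lborel disk \<noteq> \<infinity>" unfolding disk_def using emeasure_lborel_cball_finite[of 0 1] by (simp add: less_top)
  then show "emeasure lborel disk \<noteq> 0" using disk_pos by (auto simp: measure_def)
qed
lemma rho_DD: "rho (hyp a) (hyp b) = measure lborel (DD a b) / measure lborel disk"
proof -
  have "rho (hyp a) (hyp b) = measure unif_disk (DD a b)"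
    unfolding rho_def DD_def hyp_def by simp
  also have "\<dots> = measure lborel (disk \<inter> DD a b) / measure lborel disk"
    unfolding unif_disk_def by (rule measure_uniform_measure[OF disk_emeas]) (use DD_sets in simp)
  also have "disk \<inter> DD a b = DD a b" unfolding DD_def by auto
  finally show ?thesis .
qed
lemma hh_disk: "norm n = 1 \<Longrightarrow> hh n x \<in> disk \<longleftrightarrow> x \<in> disk"
  unfolding disk_def by (simp add: hh_norm)
lemma measure_hh:
  assumes n: "norm n = 1" and S: "S \<in> sets lborel" "bounded S"
  shows "measure lborel (hh n ` S) = measure lborel S"
proof -
  have cont: "continuous_on UNIV (hh n)"
    using hh_linear linear_continuous_on linear_conv_bounded_linear by blast
  have "hh n -` S \<in> sets lborel"
    using measurable_sets_borel[OF borel_measurable_continuous_onI[OF cont] S(1)[simplified]] by simp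
  then have "hh n ` S \<in> sets lborel" using hh_image[OF n] by simp
  then have "measure lborel (hh n ` S) = measure lebesgue (hh n ` S)" by (rule meas_leb)
  also have "\<dots> = measure lebesgue S"
    by (rule measure_orthogonal_image[OF hh_orth[OF n] lmeas[OF S]])
  also have "\<dots> = measure lborel S" using meas_leb[OF S(1)] by simp
  finally show ?thesis .
qed
lemma rho_hh:
  assumes n: "norm n = 1"
  shows "rho (hyp (hh n a)) (hyp (hh n b)) = rho (hyp a) (hyp b)"
proof -
  have "DD (hh n a) (hh n b) = hh n -` DD a b"
    unfolding DD_def using hh_disk[OF n] by (auto simp: hh_inner)
  then have "DD (hh n a) (hh n b) = hh n ` DD a b" using hh_image[OF n] by simp
  then show ?thesis unfolding rho_DD using measure_hh[OF n DD_sets DD_bounded] by simp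
qed
lemma hyp_scale: "c > 0 \<Longrightarrow> hyp (c *\<^sub>R w) = hyp w"
  unfolding hyp_def by (rule ext) (simp add: sgn_mult)
lemma line_null: "(v::real^2) \<noteq> 0 \<Longrightarrow> {x. x \<bullet> v = 0} \<in> null_sets lborel"
proof -
  assume v: "v \<noteq> 0"
  have "negligible {x::real^2. v \<bullet> x = 0}" using negligible_hyperplane v by blast
  then have "{x::real^2. x \<bullet> v = 0} \<in> null_sets lebesgue"
    by (simp add: negligible_iff_null_sets inner_commute)
  moreover have "{x::real^2. x \<bullet> v = 0} \<in> sets lborel" by measurable
  ultimately show ?thesis using null_sets_completion_iff by blast
qed
lemma key:
  fixes c1 t1 c2 t2 :: real
  assumes "c1 < c2" "t1 \<ge> 0" "t2 \<ge> 0" "c1^2+t1^2=1" "c2^2+t2^2=1"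
  shows "c1* t2 \<le> c2* t1"
proof (cases "c1 \<le> 0 \<and> 0 \<le> c2")
  case True
  then have "c1* t2 \<le> 0" "0 \<le> c2* t1" using assms(2,3)
    by (simp_all add: mult_nonpos_nonneg mult_nonneg_nonneg)
  then show ?thesis by linarith
next
  case False
  then consider "0 < c1" | "c2 < 0" using assms(1) by linarith
  then show ?thesis
  proof cases
    case 1
    then have "c1^2 < c2^2" using assms(1) by (intro power_strict_mono) auto
    then have "t2^2 \<le> t1^2" using assms by linarith
    then have "t2 \<le> t1" using assms(2) by (rule power2_le_imp_le)
    then show ?thesis using 1 assms(1,3) by (intro mult_mono) auto
  next
    case 2
    then have "(-c2)^2 < (-c1)^2" using assms(1) by (intro power_strict_mono) auto
    then have "c2^2 < c1^2" by simp
    then have "t1^2 \<le> t2^2" using assms by linarith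
    then have "t1 \<le> t2" using assms(3) by (rule power2_le_imp_le)
    have "c1* t2 \<le> c1* t1" using \<open>t1 \<le> t2\<close> assms 2 by (intro mult_left_mono_neg) auto
    also have "\<dots> \<le> c2* t1" using assms by (intro mult_right_mono) auto
    finally show ?thesis .
  qed
qed
lemma arith1:
  fixes a b c1 t1 c2 t2 :: real
  assumes "c1 < c2" "t1 \<ge> 0" "t2 \<ge> 0" "c1^2+t1^2=1" "c2^2+t2^2=1" "a > 0" "a*c2+b* t2 \<le> 0"
  shows "a*c1+b* t1 \<le> 0"
proof (cases "t2 = 0")
  case True
  then have "c2^2 = 1" using assms by simp
  then have "c2 = 1 \<or> c2 = -1" by (simp add: power2_eq_1_iff)
  moreover have "c2 \<noteq> -1"
  proof
    assume "c2 = -1"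
    then have "1 < -c1" using assms(1) by simp
    then have "1*1 < (-c1)*(-c1)" by (intro mult_strict_mono) auto
    then have "1 < c1^2" by (simp add: power2_eq_square)
    then show False using assms(4) zero_le_power2[of t1] by linarith
  qed
  ultimately have "c2 = 1" by blast
  then show ?thesis using True assms by simp
next
  case False
  then have t2: "t2 > 0" using assms by simp
  have "t2*(a*c1+b* t1) = a*(c1* t2) + b* t1* t2" by (simp add: algebra_simps)
  also have "\<dots> \<le> a*(c2* t1) + b* t1* t2" using key[OF assms(1-5)] assms(6) by simp
  also have "\<dots> = t1*(a*c2+b* t2)" by (simp add: algebra_simps)
  also have "\<dots> \<le> 0" using assms by (simp add: mult_nonneg_nonpos)
  finally show ?thesis using t2 by (simp add: mult_le_0_iff)
qed

lemma sgn_pos_iff: "sgn (y::real) = 1 \<longleftrightarrow> y > 0" and sgn_neg_iff: "sgn (y::real) = -1 \<longleftrightarrow> y < 0"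
  by (simp_all add: sgn_real_def)
lemma inner_sgn_v: "x \<bullet> (v::real^2) = norm v * (x \<bullet> sgn v)"
  by (cases "v = 0") (simp_all add: sgn_div_norm inner_scaleR_right)
lemma fmeas: "S \<in> sets lborel \<Longrightarrow> bounded S \<Longrightarrow> S \<in> fmeasurable lborel"
  using emeasure_bounded_finite[of S] by (intro fmeasurableI) auto

lemma DD_incl:
  fixes v w1 w2 :: "real^2"
  defines "e \<equiv> sgn v"
  assumes v: "v \<noteq> 0" and n1: "norm w1 = 1" and n2: "norm w2 = 1"
    and s1: "w1 \<bullet> perp e \<ge> 0" and s2: "w2 \<bullet> perp e \<ge> 0" and c: "w1 \<bullet> e < w2 \<bullet> e"
  shows "DD w2 v \<subseteq> DD w1 v \<union> ({x. x \<bullet> v = 0} \<inter> disk)"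
proof
  fix x assume x: "x \<in> DD w2 v"
  have ne: "norm e = 1" using v by (simp add: e_def norm_sgn)
  have nv: "norm v > 0" using v by simp
  show "x \<in> DD w1 v \<union> ({x. x \<bullet> v = 0} \<inter> disk)"
  proof (cases "x \<bullet> v = 0")
    case True then show ?thesis using x by (auto simp: DD_def)
  next
    case False
    define a where "a = x \<bullet> e"
    define b where "b = x \<bullet> perp e"
    have xv: "x \<bullet> v = norm v * a" unfolding a_def e_def by (rule inner_sgn_v)
    have a0: "a \<noteq> 0" using False xv by simp
    have xw: "x \<bullet> w = a * (w \<bullet> e) + b * (w \<bullet> perp e)" for w
      unfolding a_def b_def by (rule decomp[OF ne])
    have ww: "(w \<bullet> e)^2 + (w \<bullet> perp e)^2 = 1" if "norm w = 1" for w
      using decomp[OF ne, of w w] that by (simp add: power2_eq_square power2_norm_eq_inner[symmetric])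
    have sv: "sgn (x \<bullet> v) = sgn a" using xv nv by (simp add: sgn_mult)
    have xin: "x \<in> disk" and d2: "sgn (x \<bullet> w2) \<noteq> sgn a" using x sv by (auto simp: DD_def)
    have "sgn (x \<bullet> w1) \<noteq> sgn a"
    proof (cases "a > 0")
      case True
      then have "x \<bullet> w2 \<le> 0" using d2 by (auto simp: sgn_real_def split: if_splits)
      then have "a * (w1 \<bullet> e) + b * (w1 \<bullet> perp e) \<le> 0"
        using arith1[OF c s1 s2 ww[OF n1] ww[OF n2] True] xw by simp
      then show ?thesis using True xw[of w1] by (auto simp: sgn_real_def)
    next
      case False
      then have an: "-a > 0" using a0 by simp
      then have "x \<bullet> w2 \<ge> 0" using d2 by (auto simp: sgn_real_def split: if_splits)
      then have "(-a) * (w2 \<bullet> e) + (-b) * (w2 \<bullet> perp e) \<le> 0" using xw[of w2] by simp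
      then have "(-a) * (w1 \<bullet> e) + (-b) * (w1 \<bullet> perp e) \<le> 0"
        by (rule arith1[OF c s1 s2 ww[OF n1] ww[OF n2] an])
      then show ?thesis using an xw[of w1] by (auto simp: sgn_real_def)
    qed
    then show ?thesis using xin sv by (auto simp: DD_def)
  qed
qed

lemma open_pos:
  assumes "open U" "U \<noteq> {}" "bounded U"
  shows "measure lborel U > 0"
proof -
  have U: "U \<in> sets lborel" using assms(1) by simp
  have "\<not> negligible U" by (rule open_not_negligible[OF assms(1,2)])
  then have "measure lebesgue U \<noteq> 0" using negligible_iff_measure0 lmeas[OF U assms(3)] by blast
  then show ?thesis using meas_leb[OF U] measure_nonneg[of lborel U] by linarith
qed

lemma DD_strict:
  fixes v w1 w2 :: "real^2"
  defines "e \<equiv> sgn v"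
  assumes v: "v \<noteq> 0" and n1: "norm w1 = 1" and n2: "norm w2 = 1"
    and s1: "w1 \<bullet> perp e \<ge> 0" and s2: "w2 \<bullet> perp e \<ge> 0" and c: "w1 \<bullet> e < w2 \<bullet> e"
  shows "measure lborel (DD w2 v) < measure lborel (DD w1 v)"
proof -
  define L where "L = {x. x \<bullet> v = 0} \<inter> disk"
  define U where "U = {x::real^2. norm x < 1 \<and> 0 < x \<bullet> v \<and> x \<bullet> w1 < 0 \<and> 0 < x \<bullet> w2}"
  have incl: "DD w2 v \<subseteq> DD w1 v \<union> L"
    unfolding L_def e_def by (rule DD_incl[OF v n1 n2 s1[unfolded e_def] s2[unfolded e_def] c[unfolded e_def]])
  have Lnull: "L \<in> null_sets lborel" unfolding L_def
    using null_set_Int2[OF line_null[OF v] disk_sets] by (simp add: Int_commute)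
  have openU: "open U" unfolding U_def
    by (intro open_Collect_conj open_Collect_less continuous_intros)
  have Ub: "bounded U" unfolding U_def by (rule bounded_subset[of "ball 0 1"]) (simp_all add: subset_iff dist_norm)
  have Usets: "U \<in> sets lborel" using openU by simp
  have UD1: "U \<subseteq> DD w1 v"
  proof
    fix x assume "x \<in> U"
    then have h: "norm x < 1" "0 < x \<bullet> v" "x \<bullet> w1 < 0" by (simp_all add: U_def)
    then have "sgn (x \<bullet> v) = 1" "sgn (x \<bullet> w1) = -1" by (simp_all only: sgn_pos_iff sgn_neg_iff)
    moreover have "x \<in> disk" using h(1) by (simp add: disk_def)
    ultimately show "x \<in> DD w1 v" by (simp add: DD_def)
  qed
  have UD2: "U \<inter> DD w2 v = {}"
  proof -
    have False if "x \<in> U" "x \<in> DD w2 v" for x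
    proof -
      from that(1) have h: "0 < x \<bullet> v" "0 < x \<bullet> w2" by (simp_all add: U_def)
      then have "sgn (x \<bullet> v) = 1" "sgn (x \<bullet> w2) = 1" by (simp_all only: sgn_pos_iff)
      then show False using that(2) by (simp add: DD_def)
    qed
    then show ?thesis by blast
  qed
  have nv: "norm v > 0" using v by simp
  have wv: "w \<bullet> v = norm v * (w \<bullet> e)" for w unfolding e_def by (rule inner_sgn_v)
  have cv: "w1 \<bullet> v < w2 \<bullet> v" using c nv wv[of w1] wv[of w2] by simp
  have neq: "w1 \<noteq> w2" using c by auto
  have ii1: "w1 \<bullet> w1 = 1" using n1 by (simp add: dot_square_norm)
  have ii2: "w2 \<bullet> w2 = 1" using n2 by (simp add: dot_square_norm)
  have "0 < norm (w1 - w2)^2" using neq by simp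
  also have "norm (w1 - w2)^2 = (w1 - w2) \<bullet> (w1 - w2)" by (rule power2_norm_eq_inner)
  also have "\<dots> = 2 - 2 * (w1 \<bullet> w2)"
    using ii1 ii2 by (simp add: inner_diff_left inner_diff_right inner_commute)
  finally have w12: "w1 \<bullet> w2 < 1" by simp
  define x0 where "x0 = (1/4) *\<^sub>R (w2 - w1)"
  have "norm x0 \<le> (1/4) * (norm w2 + norm w1)" unfolding x0_def
    using norm_triangle_ineq4[of w2 w1] by simp
  then have "norm x0 < 1" using n1 n2 by simp
  moreover have "0 < x0 \<bullet> v" unfolding x0_def using cv by (simp add: inner_diff_left)
  moreover have "x0 \<bullet> w1 < 0" unfolding x0_def using w12 ii1
    by (simp add: inner_diff_left inner_diff_right inner_commute)
  moreover have "0 < x0 \<bullet> w2" unfolding x0_def using w12 ii2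
    by (simp add: inner_diff_left inner_diff_right inner_commute)
  ultimately have "x0 \<in> U" unfolding U_def by simp
  then have Upos: "measure lborel U > 0" using open_pos[OF openU _ Ub] by auto
  have f2: "DD w2 v \<in> fmeasurable lborel" by (rule fmeas[OF DD_sets DD_bounded])
  have fU: "U \<in> fmeasurable lborel" by (rule fmeas[OF Usets Ub])
  have f1: "DD w1 v \<in> fmeasurable lborel" by (rule fmeas[OF DD_sets DD_bounded])
  have fL: "L \<in> fmeasurable lborel" using Lnull by (intro fmeasurableI) auto
  have "measure lborel (DD w2 v) + measure lborel U = measure lborel (DD w2 v \<union> U)"
    using UD2 f2 fU by (subst measure_Union) (auto simp: fmeasurable_def)
  also have "\<dots> \<le> measure lborel (DD w1 v \<union> L)"
    using incl UD1 f1 fL DD_sets Usets by (intro measure_mono_fmeasurable) (auto intro: fmeasurable.Un)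
  also have "\<dots> = measure lborel (DD w1 v)"
    using Lnull DD_sets by (intro measure_Un_null_set) auto
  finally show ?thesis using Upos by linarith
qed

definition gd :: "real^2 \<Rightarrow> real \<Rightarrow> real^2 \<Rightarrow> real" where
  "gd v \<sigma> w = (\<Prod>i\<in>UNIV. normal_density (v $ i) \<sigma> (w $ i))"
lemma gauss2_gd: "gauss2 v \<sigma> = density lborel (\<lambda>w. ennreal (gd v \<sigma> w))"
  unfolding gauss2_def gd_def ..
lemma gd_meas[measurable]: "gd v \<sigma> \<in> borel_measurable borel"
  unfolding gd_def by measurable
lemma gd_pos: "\<sigma> > 0 \<Longrightarrow> gd v \<sigma> w > 0"
  unfolding gd_def by (intro prod_pos) (simp add: normal_density_pos)
lemma gd_formula:
  "gd v \<sigma> w = (1 / sqrt (2 * pi * \<sigma>\<^sup>2)) * (1 / sqrt (2 * pi * \<sigma>\<^sup>2)) * exp (- (norm (w - v))\<^sup>2 / (2 * \<sigma>\<^sup>2))"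
proof -
  have p2: "(\<Prod>i\<in>(UNIV::2 set). h i) = h 1 * h 2" for h :: "2 \<Rightarrow> real"
    by (simp add: UNIV_2)
  have "norm (w - v)^2 = (w$1 - v$1)^2 + (w$2 - v$2)^2" using norm2[of "w - v"] by simp
  then have "- (norm (w - v))\<^sup>2 / (2 * \<sigma>\<^sup>2) = -((w$1 - v$1)^2) / (2 * \<sigma>\<^sup>2) + -((w$2 - v$2)^2) / (2 * \<sigma>\<^sup>2)"
    by (simp add: diff_divide_distrib)
  then have E: "exp (-((w$1 - v$1)^2) / (2 * \<sigma>\<^sup>2)) * exp (-((w$2 - v$2)^2) / (2 * \<sigma>\<^sup>2)) = exp (- (norm (w - v))\<^sup>2 / (2 * \<sigma>\<^sup>2))"
    by (simp only: exp_add[symmetric])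
  show ?thesis unfolding gd_def p2 normal_density_def E[symmetric] by (simp only: mult_ac)
qed
lemma Basis_real2: "(Basis :: (real^2) set) = (\<lambda>i. axis i 1) ` UNIV"
  by (auto simp: Basis_vec_def)
lemma gauss_prob: assumes sp: "\<sigma> > 0" shows "prob_space (gauss2 v \<sigma>)"
proof
  have inj: "inj (\<lambda>i::2. axis i (1::real))" by (auto simp: inj_def axis_eq_axis)
  have eq: "ennreal (gd v \<sigma> x) = (\<Prod>b\<in>Basis. ennreal (normal_density (v \<bullet> b) \<sigma> (x \<bullet> b)))" for x
    unfolding Basis_real2 gd_def
    by (subst prod.reindex[OF inj]) (simp add: prod_ennreal cart_eq_inner_axis[symmetric])
  have "emeasure (gauss2 v \<sigma>) (space (gauss2 v \<sigma>)) = (\<integral>\<^sup>+ x. ennreal (gd v \<sigma> x) \<partial>lborel)"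
    unfolding gauss2_gd by (subst emeasure_density) auto
  also have "\<dots> = (\<integral>\<^sup>+ x. (\<Prod>b\<in>Basis. ennreal (normal_density (v \<bullet> b) \<sigma> (x \<bullet> b))) \<partial>lborel)"
    unfolding eq ..
  also have "\<dots> = (\<Prod>b\<in>Basis. (\<integral>\<^sup>+ y. ennreal (normal_density (v \<bullet> b) \<sigma> y) \<partial>lborel))"
    by (rule nn_integral_lborel_prod) auto
  also have "\<dots> = 1"
  proof (rule prod.neutral, rule ballI)
    fix b :: "real^2"
    interpret P: prob_space "density lborel (normal_density (v \<bullet> b) \<sigma>)" by (rule prob_space_normal_density) (rule sp)
    have "emeasure (density lborel (normal_density (v \<bullet> b) \<sigma>)) UNIV = 1"
      using P.emeasure_space_1 by simp
    then show "(\<integral>\<^sup>+ y. ennreal (normal_density (v \<bullet> b) \<sigma> y) \<partial>lborel) = 1"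
      by (simp add: emeasure_density)
  qed
  finally show "emeasure (gauss2 v \<sigma>) (space (gauss2 v \<sigma>)) = 1" .
qed

lemma hh_meas[measurable]: "hh n \<in> borel_measurable borel"
  using hh_linear linear_continuous_on linear_conv_bounded_linear borel_measurable_continuous_onI by blast
lemma emeasure_hh:
  assumes n: "norm n = 1" and S: "S \<in> sets lborel" "bounded S"
  shows "emeasure lborel (hh n ` S) = emeasure lborel S"
proof -
  have "hh n -` S \<in> sets lborel" using measurable_sets_borel[OF hh_meas] S(1) by simp
  then have I: "hh n ` S \<in> sets lborel" using hh_image[OF n] by simp
  have b: "bounded (hh n ` S)"
    using bounded_linear_image[OF S(2)] hh_linear linear_conv_bounded_linear by blast
  have "emeasure lborel (hh n ` S) = ennreal (measure lborel (hh n ` S))"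
    using emeasure_bounded_finite[OF b] by (intro emeasure_eq_ennreal_measure) auto
  also have "\<dots> = ennreal (measure lborel S)" using measure_hh[OF n S] by simp
  also have "\<dots> = emeasure lborel S"
    using emeasure_bounded_finite[OF S(2)] by (intro emeasure_eq_ennreal_measure[symmetric]) auto
  finally show ?thesis .
qed
lemma lborel_hh:
  assumes n: "norm n = 1"
  shows "distr lborel borel (hh n) = lborel"
proof (rule lborel_eqI[symmetric])
  fix l u :: "real^2" assume lu: "\<And>b. b \<in> Basis \<Longrightarrow> l \<bullet> b \<le> u \<bullet> b"
  have "emeasure (distr lborel borel (hh n)) (box l u) = emeasure lborel (hh n -` box l u)"
    by (subst emeasure_distr) auto
  also have "\<dots> = emeasure lborel (hh n ` box l u)" using hh_image[OF n] by simp
  also have "\<dots> = emeasure lborel (box l u)" by (rule emeasure_hh[OF n]) auto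
  also have "\<dots> = (\<Prod>b\<in>Basis. (u - l) \<bullet> b)" using lu by (rule emeasure_lborel_box)
  finally show "emeasure (distr lborel borel (hh n)) (box l u) = (\<Prod>b\<in>Basis. (u - l) \<bullet> b)" .
qed simp

definition Tm :: "real^2 \<Rightarrow> real^2 \<Rightarrow> real^2 \<Rightarrow> real^2" where
  "Tm n v w = hh n (w - v) + v"
lemma Tm_meas[measurable]: "Tm n v \<in> borel_measurable borel"
  unfolding Tm_def by measurable
lemma lborel_Tm:
  assumes n: "norm n = 1"
  shows "distr lborel borel (Tm n v) = lborel"
proof -
  have m1: "((+) c) \<in> borel_measurable (borel :: (real^2) measure)" for c by measurable
  have eqT: "Tm n v = ((+) v) \<circ> (hh n \<circ> ((+) (-v)))"
    by (rule ext) (simp add: Tm_def)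
  have "distr lborel borel (Tm n v) = distr (distr lborel borel (hh n \<circ> ((+) (-v)))) borel ((+) v)"
    unfolding eqT by (subst distr_distr) (auto simp: m1)
  also have "distr lborel borel (hh n \<circ> ((+) (-v))) = distr (distr lborel borel ((+) (-v))) borel (hh n)"
    by (subst distr_distr) (auto simp: m1)
  also have "\<dots> = lborel" by (simp only: lborel_distr_plus lborel_hh[OF n])
  also have "distr lborel borel ((+) v) = lborel" by (rule lborel_distr_plus)
  finally show ?thesis .
qed
lemma gd_Tm:
  assumes n: "norm n = 1"
  shows "gd v \<sigma> (Tm n v w) = gd v \<sigma> w"
proof -
  have "norm (Tm n v w - v) = norm (w - v)" unfolding Tm_def using hh_norm[OF n] by simp
  then show ?thesis by (simp only: gd_formula)
qed
lemma gauss_inv: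
  assumes n: "norm n = 1" and A: "A \<in> sets borel"
  shows "emeasure (gauss2 v \<sigma>) (Tm n v -` A) = emeasure (gauss2 v \<sigma>) A"
proof -
  have A': "Tm n v -` A \<in> sets borel" using measurable_sets_borel[OF Tm_meas A] by simp
  have "emeasure (gauss2 v \<sigma>) (Tm n v -` A) = (\<integral>\<^sup>+ w. ennreal (gd v \<sigma> w) * indicator (Tm n v -` A) w \<partial>lborel)"
    unfolding gauss2_gd using A' by (subst emeasure_density) auto
  also have "\<dots> = (\<integral>\<^sup>+ w. ennreal (gd v \<sigma> (Tm n v w)) * indicator A (Tm n v w) \<partial>lborel)"
    by (simp add: gd_Tm[OF n] indicator_def)
  also have "\<dots> = (\<integral>\<^sup>+ y. ennreal (gd v \<sigma> y) * indicator A y \<partial>(distr lborel borel (Tm n v)))"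
    using A by (subst nn_integral_distr) auto
  also have "\<dots> = (\<integral>\<^sup>+ y. ennreal (gd v \<sigma> y) * indicator A y \<partial>lborel)"
    by (simp only: lborel_Tm[OF n])
  also have "\<dots> = emeasure (gauss2 v \<sigma>) A"
    unfolding gauss2_gd using A by (subst emeasure_density) auto
  finally show ?thesis .
qed

lemma G_pos:
  assumes sp: "\<sigma> > 0" and Oh: "open Ob" "Ob \<noteq> {}" "bounded Ob"
  shows "measure (gauss2 v \<sigma>) Ob > 0"
proof (rule ccontr)
  interpret G: prob_space "gauss2 v \<sigma>" by (rule gauss_prob[OF sp])
  assume "\<not> measure (gauss2 v \<sigma>) Ob > 0"
  then have "measure (gauss2 v \<sigma>) Ob = 0" using measure_nonneg[of "gauss2 v \<sigma>" Ob] by linarith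
  moreover have Os: "Ob \<in> sets (gauss2 v \<sigma>)" using Oh(1) by (simp add: gauss2_gd)
  ultimately have "Ob \<in> null_sets (gauss2 v \<sigma>)"
    by (simp add: G.emeasure_eq_measure null_sets_def)
  then have ae: "AE x in lborel. x \<in> Ob \<longrightarrow> ennreal (gd v \<sigma> x) = 0"
    unfolding gauss2_gd by (subst (asm) null_sets_density_iff) auto
  have nz: "\<forall>x. ennreal (gd v \<sigma> x) \<noteq> 0" using gd_pos[OF sp] by (metis ennreal_eq_0_iff not_le)
  have "AE x in lborel. x \<notin> Ob" using ae by eventually_elim (use nz in auto)
  then have "Ob \<in> null_sets lborel" using Oh(1) by (subst AE_iff_null_sets) auto
  then have "measure lborel Ob = 0" by (rule measure_eq_0_null_sets)
  with open_pos[OF Oh] show False by simp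
qed
lemma G_null:
  assumes "A \<in> null_sets lborel"
  shows "A \<in> null_sets (gauss2 v \<sigma>)"
proof -
  have As: "A \<in> sets lborel" using assms by (rule null_setsD2)
  have ae: "AE x in lborel. x \<in> A \<longrightarrow> ennreal (gd v \<sigma> x) = 0"
    using AE_not_in[OF assms] by eventually_elim auto
  show ?thesis unfolding gauss2_gd using As ae by (subst null_sets_density_iff) auto
qed

lemma hh_swap:
  assumes n1: "norm u1 = 1" and n2: "norm u2 = 1" and ne: "u1 \<noteq> u2"
  defines "n \<equiv> (1 / norm (u1 - u2)) *\<^sub>R (u1 - u2)"
  shows "hh n u2 = u1" "norm n = 1"
proof -
  define d where "d = u1 - u2"
  have ii1: "u1 \<bullet> u1 = 1" using n1 by (simp add: dot_square_norm)
  have ii2: "u2 \<bullet> u2 = 1" using n2 by (simp add: dot_square_norm)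
  have dd: "d \<bullet> d = - 2 * (d \<bullet> u2)" unfolding d_def using ii1 ii2
    by (simp add: inner_diff_left inner_diff_right inner_commute)
  have dpos: "d \<bullet> d > 0" using ne unfolding d_def by simp
  have m: "norm d * norm d = d \<bullet> d" by (simp add: dot_square_norm power2_eq_square)
  have nd: "norm d > 0" using ne unfolding d_def by simp
  have "hh n u2 = u2 - (2 * (n \<bullet> u2)) *\<^sub>R n" by (simp add: hh_def)
  also have "(2 * (n \<bullet> u2)) *\<^sub>R n = (2 * (d \<bullet> u2) / (norm d * norm d)) *\<^sub>R d"
    unfolding n_def d_def[symmetric] by (simp add: inner_scaleR_left)
  also have "2 * (d \<bullet> u2) / (norm d * norm d) = -1"
  proof -
    have "d \<bullet> u2 \<noteq> 0" using dpos dd by linarith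
    then show ?thesis unfolding m dd by simp
  qed
  finally show "hh n u2 = u1" unfolding d_def by simp
  show "norm n = 1" unfolding n_def d_def[symmetric] using nd by simp
qed

lemma H_shift:
  assumes n1: "norm u1 = 1" and n2: "norm u2 = 1"
  shows "measure (gauss2 v \<sigma>) {w. u2 \<bullet> w \<le> 0} = measure (gauss2 v \<sigma>) {w. u1 \<bullet> w \<le> u1 \<bullet> v - u2 \<bullet> v}"
proof (cases "u1 = u2")
  case True then show ?thesis by simp
next
  case False
  define n where "n = (1 / norm (u1 - u2)) *\<^sub>R (u1 - u2)"
  have hn: "hh n u2 = u1" and nn: "norm n = 1" using hh_swap[OF n1 n2 False] unfolding n_def by auto
  have "Tm n v -` {w. u2 \<bullet> w \<le> 0} = {w. u1 \<bullet> w \<le> u1 \<bullet> v - u2 \<bullet> v}"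
  proof -
    have "u2 \<bullet> Tm n v w = u1 \<bullet> w - u1 \<bullet> v + u2 \<bullet> v" for w
    proof -
      have "u2 \<bullet> Tm n v w = u2 \<bullet> hh n (w - v) + u2 \<bullet> v" unfolding Tm_def by (rule inner_add_right)
      also have "u2 \<bullet> hh n (w - v) = hh n u2 \<bullet> (w - v)" by (rule hh_inner[symmetric])
      also have "\<dots> = u1 \<bullet> w - u1 \<bullet> v" unfolding hn by (rule inner_diff_right)
      finally show ?thesis .
    qed
    then show ?thesis by auto
  qed
  moreover have "{w. u2 \<bullet> w \<le> (0::real)} \<in> sets borel" by measurable
  ultimately have "emeasure (gauss2 v \<sigma>) {w. u1 \<bullet> w \<le> u1 \<bullet> v - u2 \<bullet> v} = emeasure (gauss2 v \<sigma>) {w. u2 \<bullet> w \<le> 0}"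
    using gauss_inv[OF nn] by metis
  then show ?thesis by (simp add: measure_def)
qed

lemma H_mono:
  assumes sp: "\<sigma> > 0" and n1: "norm u1 = 1" and n2: "norm u2 = 1" and lt: "u1 \<bullet> v < u2 \<bullet> v"
  shows "measure (gauss2 v \<sigma>) {w. u2 \<bullet> w \<le> 0} < measure (gauss2 v \<sigma>) {w. u1 \<bullet> w \<le> 0}"
proof -
  interpret G: prob_space "gauss2 v \<sigma>" by (rule gauss_prob[OF sp])
  define \<delta> where "\<delta> = u2 \<bullet> v - u1 \<bullet> v"
  have dp: "\<delta> > 0" using lt by (simp add: \<delta>_def)
  define B where "B = {w. u1 \<bullet> w \<le> -\<delta>}"
  define Ob where "Ob = {w. -\<delta> < u1 \<bullet> w \<and> u1 \<bullet> w < 0 \<and> norm w < \<delta>}"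
  have eq: "measure (gauss2 v \<sigma>) {w. u2 \<bullet> w \<le> 0} = measure (gauss2 v \<sigma>) B"
    unfolding B_def using H_shift[OF n1 n2, of v \<sigma>] by (simp add: \<delta>_def)
  have sB: "B \<in> sets (gauss2 v \<sigma>)" unfolding B_def gauss2_gd by simp
  have openO: "open Ob" unfolding Ob_def
    by (intro open_Collect_conj open_Collect_less continuous_intros)
  have sO: "Ob \<in> sets (gauss2 v \<sigma>)" using openO unfolding gauss2_gd by simp
  have bO: "bounded Ob" unfolding Ob_def by (rule bounded_subset[of "ball 0 \<delta>"]) (simp_all add: subset_iff dist_norm)
  have ii1: "u1 \<bullet> u1 = 1" using n1 by (simp add: dot_square_norm)
  have "(-(\<delta>/2)) *\<^sub>R u1 \<in> Ob" unfolding Ob_def using dp ii1 n1 by simp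
  then have pO: "measure (gauss2 v \<sigma>) Ob > 0" using G_pos[OF sp openO _ bO] by auto
  have disj: "B \<inter> Ob = {}" unfolding B_def Ob_def by auto
  have sub: "B \<union> Ob \<subseteq> {w. u1 \<bullet> w \<le> 0}" unfolding B_def Ob_def using dp by auto
  have sC: "{w. u1 \<bullet> w \<le> (0::real)} \<in> sets (gauss2 v \<sigma>)" unfolding gauss2_gd by simp
  have "measure (gauss2 v \<sigma>) B + measure (gauss2 v \<sigma>) Ob = measure (gauss2 v \<sigma>) (B \<union> Ob)"
    using disj sB sO by (simp add: G.finite_measure_Union)
  also have "\<dots> \<le> measure (gauss2 v \<sigma>) {w. u1 \<bullet> w \<le> 0}"
    using sub sC by (intro G.finite_measure_mono) auto
  finally show ?thesis using eq pO by linarith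
qed
lemma H_eq:
  assumes n1: "norm u1 = 1" and n2: "norm u2 = 1" and eq: "u1 \<bullet> v = u2 \<bullet> v"
  shows "measure (gauss2 v \<sigma>) {w. u2 \<bullet> w \<le> 0} = measure (gauss2 v \<sigma>) {w. u1 \<bullet> w \<le> 0}"
  using H_shift[OF n1 n2, of v \<sigma>] eq by simp

lemma unit_sgn: "v \<noteq> 0 \<Longrightarrow> norm (sgn (v::real^2)) = 1" by (simp add: norm_sgn)
lemma perp_unit: "v \<noteq> 0 \<Longrightarrow> norm (perp (sgn (v::real^2))) = 1" by (simp add: perp_norm norm_sgn)
lemma ee: "norm e = 1 \<Longrightarrow> e \<bullet> e = 1" by (simp add: dot_square_norm)

lemma rho_flip:
  assumes v: "v \<noteq> 0" and n: "norm w = 1"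
  shows "\<exists>w'. norm w' = 1 \<and> w' \<bullet> perp (sgn v) \<ge> 0 \<and> w' \<bullet> v = w \<bullet> v \<and> rho (hyp w') (hyp v) = rho (hyp w) (hyp v)"
proof (cases "w \<bullet> perp (sgn v) \<ge> 0")
  case True then show ?thesis using n by blast
next
  case False
  define p where "p = perp (sgn v)"
  have np: "norm p = 1" unfolding p_def by (rule perp_unit[OF v])
  have pv: "p \<bullet> v = 0" unfolding p_def inner_sgn_v[of "perp (sgn v)" v] by (simp add: inner_commute)
  have hv: "hh p v = v" unfolding hh_def using pv by simp
  have hp: "hh p p = - p" unfolding hh_def ee[OF np] by (simp add: scaleR_2 algebra_simps)
  show ?thesis
  proof (intro exI conjI)
    show "norm (hh p w) = 1" using hh_norm[OF np] n by simp
    show "hh p w \<bullet> perp (sgn v) \<ge> 0" unfolding p_def[symmetric] hh_inner hp using False p_def by simp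
    show "hh p w \<bullet> v = w \<bullet> v" unfolding hh_inner hv ..
    show "rho (hyp (hh p w)) (hyp v) = rho (hyp w) (hyp v)" using rho_hh[OF np, of w v] hv by simp
  qed
qed

lemma rho_cmp:
  assumes v: "v \<noteq> 0" and n1: "norm w1 = 1" and n2: "norm w2 = 1" and lt: "w1 \<bullet> v < w2 \<bullet> v"
  shows "rho (hyp w2) (hyp v) < rho (hyp w1) (hyp v)"
proof -
  obtain f1 where f1: "norm f1 = 1" "f1 \<bullet> perp (sgn v) \<ge> 0" "f1 \<bullet> v = w1 \<bullet> v" "rho (hyp f1) (hyp v) = rho (hyp w1) (hyp v)"
    using rho_flip[OF v n1] by blast
  obtain f2 where f2: "norm f2 = 1" "f2 \<bullet> perp (sgn v) \<ge> 0" "f2 \<bullet> v = w2 \<bullet> v" "rho (hyp f2) (hyp v) = rho (hyp w2) (hyp v)"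
    using rho_flip[OF v n2] by blast
  have nv: "norm v > 0" using v by simp
  have "norm v * (f1 \<bullet> sgn v) < norm v * (f2 \<bullet> sgn v)"
    using lt f1(3) f2(3) inner_sgn_v[of f1 v] inner_sgn_v[of f2 v] by linarith
  then have "f1 \<bullet> sgn v < f2 \<bullet> sgn v" using nv by (simp add: mult_less_cancel_left_pos)
  from DD_strict[OF v f1(1) f2(1) f1(2) f2(2) this]
  have "measure lborel (DD f2 v) < measure lborel (DD f1 v)" .
  then have "rho (hyp f2) (hyp v) < rho (hyp f1) (hyp v)"
    unfolding rho_DD using disk_pos by (simp add: divide_strict_right_mono)
  then show ?thesis using f1(4) f2(4) by simp
qed

lemma rho_eqv:
  assumes v: "v \<noteq> 0" and n1: "norm w1 = 1" and n2: "norm w2 = 1" and eq: "w1 \<bullet> v = w2 \<bullet> v"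
  shows "rho (hyp w2) (hyp v) = rho (hyp w1) (hyp v)"
proof -
  obtain f1 where f1: "norm f1 = 1" "f1 \<bullet> perp (sgn v) \<ge> 0" "f1 \<bullet> v = w1 \<bullet> v" "rho (hyp f1) (hyp v) = rho (hyp w1) (hyp v)"
    using rho_flip[OF v n1] by blast
  obtain f2 where f2: "norm f2 = 1" "f2 \<bullet> perp (sgn v) \<ge> 0" "f2 \<bullet> v = w2 \<bullet> v" "rho (hyp f2) (hyp v) = rho (hyp w2) (hyp v)"
    using rho_flip[OF v n2] by blast
  define e where "e = sgn v"
  define p where "p = perp e"
  have ne: "norm e = 1" unfolding e_def using v by (simp add: norm_sgn)
  have nv: "norm v > 0" using v by simp
  have "norm v * (f1 \<bullet> sgn v) = norm v * (f2 \<bullet> sgn v)"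
    using eq f1(3) f2(3) inner_sgn_v[of f1 v] inner_sgn_v[of f2 v] by linarith
  then have ce: "f1 \<bullet> e = f2 \<bullet> e" using nv unfolding e_def by simp
  have sq: "(f \<bullet> e)^2 + (f \<bullet> p)^2 = 1" if "norm f = 1" for f
    using decomp[OF ne, of f f] ee[OF that] unfolding p_def by (simp add: power2_eq_square)
  have "(f1 \<bullet> p)^2 = (f2 \<bullet> p)^2" using sq[OF f1(1)] sq[OF f2(1)] ce by simp
  then have cp: "f1 \<bullet> p = f2 \<bullet> p" using f1(2) f2(2) unfolding p_def e_def by (rule power2_eq_imp_eq)
  have "(f1 - f2) \<bullet> (f1 - f2) = ((f1 - f2) \<bullet> e) * ((f1 - f2) \<bullet> e) + ((f1 - f2) \<bullet> p) * ((f1 - f2) \<bullet> p)"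
    unfolding p_def by (rule decomp[OF ne])
  also have "\<dots> = 0" using ce cp by (simp add: inner_diff_left)
  finally have "f1 = f2" by simp
  then show ?thesis using f1(4) f2(4) by simp
qed

lemma rho_le1: "rho (hyp a) (hyp b) \<le> 1"
proof -
  have "measure lborel (DD a b) \<le> measure lborel disk"
    using fmeas[OF disk_sets disk_bounded] by (intro measure_mono_fmeasurable) (auto simp: DD_def)
  then show ?thesis unfolding rho_DD using disk_pos by simp
qed
lemma rho_line:
  assumes a: "a \<noteq> 0"
  shows "rho (hyp a) (hyp 0) = 1" "rho (hyp 0) (hyp a) = 1"
proof -
  have N: "{x. x \<bullet> a = 0} \<in> null_sets lborel" by (rule line_null[OF a])
  have "DD a 0 = disk - {x. x \<bullet> a = 0}" "DD 0 a = disk - {x. x \<bullet> a = 0}"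
    unfolding DD_def by (auto simp: sgn_eq_0_iff)
  moreover have "measure lborel (disk - {x. x \<bullet> a = 0}) = measure lborel disk"
    using N disk_sets by (intro measure_Diff_null_set) auto
  ultimately show "rho (hyp a) (hyp 0) = 1" "rho (hyp 0) (hyp a) = 1"
    unfolding rho_DD using disk_pos by simp_all
qed

lemma mis_zero: "mis_prob v \<sigma> 0 = 0"
  unfolding mis_prob_def hyp_def by simp
lemma mis_line:
  assumes sp: "\<sigma> > 0" and x: "x \<noteq> 0" and xv: "x \<bullet> v = 0"
  shows "mis_prob v \<sigma> x = 1"
proof -
  interpret G: prob_space "gauss2 v \<sigma>" by (rule gauss_prob[OF sp])
  have N: "{w. w \<bullet> x = 0} \<in> null_sets (gauss2 v \<sigma>)" by (rule G_null[OF line_null[OF x]])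
  have sp2: "space (gauss2 v \<sigma>) = UNIV" by (simp add: gauss2_gd)
  have "{w. hyp w x \<noteq> hyp v x} = space (gauss2 v \<sigma>) - {w. w \<bullet> x = 0}"
    unfolding hyp_def sp2 using xv by (auto simp: sgn_eq_0_iff inner_commute)
  then have "mis_prob v \<sigma> x = measure (gauss2 v \<sigma>) (space (gauss2 v \<sigma>) - {w. w \<bullet> x = 0})"
    unfolding mis_prob_def by simp
  also have "\<dots> = measure (gauss2 v \<sigma>) (space (gauss2 v \<sigma>))"
    using N by (intro measure_Diff_null_set) auto
  also have "\<dots> = 1" by (rule G.prob_space)
  finally show ?thesis .
qed
definition uvec :: "real^2 \<Rightarrow> real^2 \<Rightarrow> real^2" where
  "uvec v x = sgn (x \<bullet> v) *\<^sub>R sgn x"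
lemma uvec_props:
  assumes xv: "x \<bullet> v \<noteq> 0"
  shows "norm (uvec v x) = 1" "uvec v x \<bullet> v = \<bar>x \<bullet> v\<bar> / norm x"
    "\<And>w. (hyp w x \<noteq> hyp v x) \<longleftrightarrow> uvec v x \<bullet> w \<le> 0"
proof -
  have x: "x \<noteq> 0" using xv by auto
  have nx: "norm x > 0" using x by simp
  have sx: "\<bar>sgn (x \<bullet> v)\<bar> = 1" using xv by (simp add: abs_sgn_eq)
  show "norm (uvec v x) = 1" unfolding uvec_def using sx x by (simp add: norm_sgn)
  show "uvec v x \<bullet> v = \<bar>x \<bullet> v\<bar> / norm x"
  proof -
    have sa: "sgn (x \<bullet> v) * (x \<bullet> v) = \<bar>x \<bullet> v\<bar>" by (auto simp: sgn_real_def abs_if)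
    have "uvec v x \<bullet> v = (sgn (x \<bullet> v) * (x \<bullet> v)) / norm x"
      unfolding uvec_def sgn_div_norm[of x] by (simp add: inner_scaleR_left divide_inverse mult_ac)
    then show ?thesis unfolding sa .
  qed
  fix w
  have uw: "uvec v x \<bullet> w = sgn (x \<bullet> v) * (x \<bullet> w) / norm x"
    unfolding uvec_def sgn_div_norm[of x] by (simp add: inner_scaleR_left divide_inverse mult_ac)
  show "(hyp w x \<noteq> hyp v x) \<longleftrightarrow> uvec v x \<bullet> w \<le> 0"
  proof (cases "x \<bullet> v > 0")
    case True
    then have "sgn (x \<bullet> v) = 1" by (simp only: sgn_pos_iff)
    moreover have "(sgn (x \<bullet> w) \<noteq> 1) \<longleftrightarrow> x \<bullet> w \<le> 0" by (simp only: sgn_pos_iff not_less)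
    ultimately show ?thesis unfolding hyp_def uw using nx by (simp add: divide_le_0_iff inner_commute)
  next
    case False
    then have "x \<bullet> v < 0" using xv by linarith
    then have "sgn (x \<bullet> v) = -1" by (simp only: sgn_neg_iff)
    moreover have "(sgn (x \<bullet> w) \<noteq> -1) \<longleftrightarrow> x \<bullet> w \<ge> 0" by (simp only: sgn_neg_iff not_less)
    ultimately show ?thesis unfolding hyp_def uw using nx by (simp add: divide_le_0_iff zero_le_divide_iff inner_commute)
  qed
qed
lemma mis_gen:
  assumes xv: "x \<bullet> v \<noteq> 0"
  shows "mis_prob v \<sigma> x = measure (gauss2 v \<sigma>) {w. uvec v x \<bullet> w \<le> 0}"
  unfolding mis_prob_def using uvec_props(3)[OF xv] by simp
lemma H_bounds:
  assumes sp: "\<sigma> > 0" and n: "norm u = 1" and uv: "u \<bullet> v > 0"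
  shows "0 < measure (gauss2 v \<sigma>) {w. u \<bullet> w \<le> 0}" "measure (gauss2 v \<sigma>) {w. u \<bullet> w \<le> 0} < 1"
proof -
  interpret G: prob_space "gauss2 v \<sigma>" by (rule gauss_prob[OF sp])
  have ii: "u \<bullet> u = 1" by (rule ee[OF n])
  define O1 where "O1 = {w. u \<bullet> w < 0 \<and> norm w < 1}"
  have o1: "open O1" unfolding O1_def by (intro open_Collect_conj open_Collect_less continuous_intros)
  have b1: "bounded O1" unfolding O1_def by (rule bounded_subset[of "ball 0 1"]) (simp_all add: subset_iff dist_norm)
  have "(-(1/2)) *\<^sub>R u \<in> O1" unfolding O1_def using ii n by simp
  then have p1: "measure (gauss2 v \<sigma>) O1 > 0" using G_pos[OF sp o1 _ b1] by auto
  have "measure (gauss2 v \<sigma>) O1 \<le> measure (gauss2 v \<sigma>) {w. u \<bullet> w \<le> 0}"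
    using o1 by (intro G.finite_measure_mono) (auto simp: O1_def gauss2_gd)
  then show "0 < measure (gauss2 v \<sigma>) {w. u \<bullet> w \<le> 0}" using p1 by linarith
  define O2 where "O2 = {w. 0 < u \<bullet> w \<and> norm w < norm v + 1}"
  have o2: "open O2" unfolding O2_def by (intro open_Collect_conj open_Collect_less continuous_intros)
  have b2: "bounded O2" unfolding O2_def by (rule bounded_subset[of "ball 0 (norm v + 1)"]) (simp_all add: subset_iff dist_norm)
  have "v \<in> O2" unfolding O2_def using uv by simp
  then have p2: "measure (gauss2 v \<sigma>) O2 > 0" using G_pos[OF sp o2 _ b2] by auto
  have sp2: "space (gauss2 v \<sigma>) = UNIV" by (simp add: gauss2_gd)
  have C: "space (gauss2 v \<sigma>) - {w. u \<bullet> w \<le> 0} = {w. 0 < u \<bullet> w}" unfolding sp2 by auto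
  have "measure (gauss2 v \<sigma>) {w. u \<bullet> w \<le> 0} = 1 - measure (gauss2 v \<sigma>) {w. 0 < u \<bullet> w}"
    using G.prob_compl[of "{w. u \<bullet> w \<le> 0}"] C by (simp add: gauss2_gd)
  moreover have "measure (gauss2 v \<sigma>) O2 \<le> measure (gauss2 v \<sigma>) {w. 0 < u \<bullet> w}"
    using o2 by (intro G.finite_measure_mono) (auto simp: O2_def gauss2_gd)
  ultimately show "measure (gauss2 v \<sigma>) {w. u \<bullet> w \<le> 0} < 1" using p2 by linarith
qed
lemma arith2:
  fixes a b c s n :: real
  assumes a: "a \<noteq> 0" and cs: "c^2 + s^2 = 1" and n: "n > 0" and nab: "n^2 = a^2 + b^2"
    and sg: "sgn (a*c + b* s) \<noteq> sgn a"
  shows "c*n \<le> \<bar>b\<bar>"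
proof (rule ccontr)
  assume "\<not> c*n \<le> \<bar>b\<bar>"
  then have lt: "\<bar>b\<bar> < c*n" by simp
  then have "0 < c*n" by linarith
  then have c: "c > 0" using n by (simp add: zero_less_mult_iff)
  have "\<bar>b\<bar>^2 < (c*n)^2" using lt by (intro power_strict_mono) auto
  then have "b^2 < c^2 * (a^2 + b^2)" by (simp add: power_mult_distrib nab)
  then have h: "b^2 < a^2 * c^2 + b^2 * c^2" by (simp add: algebra_simps)
  have s2: "s^2 = 1 - c^2" using cs by linarith
  have "b^2 * s^2 = b^2 - b^2 * c^2" unfolding s2 by (simp add: right_diff_distrib)
  then have "b^2 * s^2 < a^2 * c^2" using h by linarith
  then have "\<bar>b* s\<bar>^2 < \<bar>a*c\<bar>^2" by (simp add: power_mult_distrib)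
  then have bs: "\<bar>b* s\<bar> < \<bar>a*c\<bar>" by (rule power2_less_imp_less) simp
  show False
  proof (cases "a > 0")
    case True
    then have "a*c > 0" using c by simp
    then have "a*c + b* s > 0" using bs abs_ge_minus_self[of "b* s"] by linarith
    then show False using sg True by (simp add: sgn_real_def)
  next
    case False
    then have "a < 0" using a by simp
    then have "a*c < 0" using c by (simp add: mult_neg_pos)
    then have "a*c + b* s < 0" using bs abs_ge_self[of "b* s"] abs_of_neg[of "a*c"] by linarith
    then show False using sg \<open>a < 0\<close> by (simp add: sgn_real_def)
  qed
qed
lemma sqcmp:
  fixes K1 K2 B1 B2 :: real
  assumes "K1 \<ge> 0" "K2 \<ge> 0" "B1 \<ge> 0" "B2 \<ge> 0" "K1^2 + B1^2 = K2^2 + B2^2"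
  shows "K1 < K2 \<longleftrightarrow> B2 < B1" "K1 = K2 \<longleftrightarrow> B1 = B2"
proof -
  have m1: "x < y \<longleftrightarrow> x^2 < y^2" if "x \<ge> 0" "y \<ge> 0" for x y :: real
    using that by (metis power2_less_imp_less power_strict_mono zero_less_numeral)
  have m2: "x = y \<longleftrightarrow> x^2 = y^2" if "x \<ge> 0" "y \<ge> 0" for x y :: real
    using that by (metis power2_eq_imp_eq)
  show "K1 < K2 \<longleftrightarrow> B2 < B1" using assms m1[of K1 K2] m1[of B2 B1] by linarith
  show "K1 = K2 \<longleftrightarrow> B1 = B2" using assms m2[of K1 K2] m2[of B1 B2] by linarith
qed

lemma LDM_unf: "LDM (hyp v) x = (INF w\<in>{w. hyp w x \<noteq> hyp v x}. ereal (rho (hyp w) (hyp v)))"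
proof -
  have "{h \<in> Hclass. h x \<noteq> hyp v x} = hyp ` {w. hyp w x \<noteq> hyp v x}"
    unfolding Hclass_def by auto
  then show ?thesis unfolding LDM_def by (simp add: image_image)
qed
lemma LDM_0: "LDM (hyp v) 0 = \<infinity>"
  unfolding LDM_unf by (simp add: hyp_def top_ereal_def)

definition qv :: "real^2 \<Rightarrow> real^2 \<Rightarrow> real^2" where
  "qv v x = (if x \<bullet> perp (sgn v) \<le> 0 then 1 else -1) *\<^sub>R ((1 / norm x) *\<^sub>R
      ((-(x \<bullet> perp (sgn v))) *\<^sub>R sgn v + (x \<bullet> sgn v) *\<^sub>R perp (sgn v)))"

lemma qv_props:
  assumes v: "v \<noteq> 0" and x: "x \<noteq> 0"
  shows "norm (qv v x) = 1" "x \<bullet> qv v x = 0" "qv v x \<bullet> sgn v = \<bar>x \<bullet> perp (sgn v)\<bar> / norm x"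
proof -
  define e where "e = sgn v"
  define p where "p = perp e"
  define a where "a = x \<bullet> e"
  define b where "b = x \<bullet> p"
  define z where "z = (-b) *\<^sub>R e + a *\<^sub>R p"
  define g where "g = (if b \<le> 0 then 1 else -1 :: real)"
  have ne: "norm e = 1" unfolding e_def using v by (simp add: norm_sgn)
  have np: "norm p = 1" unfolding p_def using ne by (simp add: perp_norm)
  have e1: "e \<bullet> e = 1" by (rule ee[OF ne])
  have p1: "p \<bullet> p = 1" by (rule ee[OF np])
  have pe: "p \<bullet> e = 0" "e \<bullet> p = 0" unfolding p_def by simp_all
  have q: "qv v x = (g / norm x) *\<^sub>R z" unfolding qv_def g_def z_def a_def b_def p_def e_def by simp
  have ze: "z \<bullet> e = -b" unfolding z_def using e1 pe by (simp add: inner_add_left inner_diff_left)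
  have zp: "z \<bullet> p = a" unfolding z_def using p1 pe by (simp add: inner_add_left inner_diff_left)
  have zz: "z \<bullet> z = b*b + a*a" using decomp[OF ne, of z z] ze zp unfolding p_def by simp
  have xx: "x \<bullet> x = a*a + b*b" using decomp[OF ne, of x x] unfolding a_def b_def p_def by simp
  have nz: "norm z = norm x" using zz xx by (simp add: norm_eq_sqrt_inner add.commute)
  have ag: "\<bar>g\<bar> = 1" unfolding g_def by simp
  have nx: "norm x > 0" using x by simp
  show "norm (qv v x) = 1" unfolding q using nz ag nx by simp
  have "x \<bullet> z = a * (z \<bullet> e) + b * (z \<bullet> p)" using decomp[OF ne, of x z] unfolding a_def b_def p_def by simp
  then have xz: "x \<bullet> z = 0" using ze zp by simp
  show "x \<bullet> qv v x = 0" unfolding q using xz by simp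
  have "qv v x \<bullet> e = g * (-b) / norm x" unfolding q using ze by (simp add: inner_scaleR_left)
  also have "g * (-b) = \<bar>b\<bar>" unfolding g_def by simp
  finally show "qv v x \<bullet> sgn v = \<bar>x \<bullet> perp (sgn v)\<bar> / norm x" unfolding b_def p_def e_def .
qed

lemma LDM_gen:
  assumes v: "v \<noteq> 0" and xv: "x \<bullet> v \<noteq> 0"
  shows "LDM (hyp v) x = ereal (rho (hyp (qv v x)) (hyp v))"
proof -
  have x: "x \<noteq> 0" using xv by auto
  define q where "q = qv v x"
  define e where "e = sgn v"
  define p where "p = perp e"
  have nq: "norm q = 1" and xq: "x \<bullet> q = 0" and qe: "q \<bullet> e = \<bar>x \<bullet> p\<bar> / norm x"
    using qv_props[OF v x] unfolding q_def e_def p_def by auto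
  have ne: "norm e = 1" unfolding e_def using v by (simp add: norm_sgn)
  have nv: "norm v > 0" using v by simp
  have nx: "norm x > 0" using x by simp
  have wv: "w \<bullet> v = norm v * (w \<bullet> e)" for w unfolding e_def by (rule inner_sgn_v)
  have feas: "q \<in> {w. hyp w x \<noteq> hyp v x}" using xq xv unfolding hyp_def by (simp add: inner_commute sgn_eq_0_iff)
  have lower: "rho (hyp q) (hyp v) \<le> rho (hyp w) (hyp v)" if w: "hyp w x \<noteq> hyp v x" for w
  proof (cases "w = 0")
    case True
    then show ?thesis using rho_line(2)[OF v] rho_le1[of q v] by simp
  next
    case False
    define w' where "w' = (1 / norm w) *\<^sub>R w"
    have hw: "hyp w' = hyp w" unfolding w'_def using False by (intro hyp_scale) simp
    have nw: "norm w' = 1" unfolding w'_def using False by simp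
    define a where "a = x \<bullet> e"
    define b where "b = x \<bullet> p"
    define c where "c = w' \<bullet> e"
    define s where "s = w' \<bullet> p"
    have a0: "a \<noteq> 0" using xv wv[of x] unfolding a_def by auto
    have cs: "c^2 + s^2 = 1" using decomp[OF ne, of w' w'] ee[OF nw] unfolding c_def s_def p_def
      by (simp add: power2_eq_square)
    have xx: "(norm x)^2 = a^2 + b^2"
    proof -
      have "(norm x)^2 = x \<bullet> x" by (rule power2_norm_eq_inner)
      also have "\<dots> = a * a + b * b" using decomp[OF ne, of x x] unfolding a_def b_def p_def by simp
      finally show ?thesis by (simp add: power2_eq_square)
    qed
    have xw: "x \<bullet> w' = a * c + b * s" using decomp[OF ne, of x w'] unfolding a_def b_def c_def s_def p_def by simp
    have sxv: "sgn (x \<bullet> v) = sgn a" using wv[of x] nv unfolding a_def by (simp add: sgn_mult)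
    have sw: "sgn (x \<bullet> w') = sgn (x \<bullet> w)" using fun_cong[OF hw, of x] unfolding hyp_def .
    have "sgn (x \<bullet> w) \<noteq> sgn (x \<bullet> v)" using w unfolding hyp_def .
    then have "sgn (a * c + b * s) \<noteq> sgn a" using sw xw sxv by simp
    from arith2[OF a0 cs nx xx this] have "c * norm x \<le> \<bar>b\<bar>" .
    then have "c \<le> q \<bullet> e" unfolding qe b_def using nx by (simp add: pos_le_divide_eq)
    then have "w' \<bullet> v \<le> q \<bullet> v" unfolding wv c_def using nv by simp
    then have "rho (hyp q) (hyp v) \<le> rho (hyp w') (hyp v)"
    proof (cases "w' \<bullet> v < q \<bullet> v")
      case True then show ?thesis using rho_cmp[OF v nw nq True] by simp
    next
      case False then have "w' \<bullet> v = q \<bullet> v" using \<open>w' \<bullet> v \<le> q \<bullet> v\<close> by simp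
      then show ?thesis using rho_eqv[OF v nw nq] by simp
    qed
    then show ?thesis using hw by simp
  qed
  have "LDM (hyp v) x = ereal (rho (hyp q) (hyp v))"
    unfolding LDM_unf
  proof (rule antisym)
    show "(INF w\<in>{w. hyp w x \<noteq> hyp v x}. ereal (rho (hyp w) (hyp v))) \<le> ereal (rho (hyp q) (hyp v))"
      using feas by (rule INF_lower)
    show "ereal (rho (hyp q) (hyp v)) \<le> (INF w\<in>{w. hyp w x \<noteq> hyp v x}. ereal (rho (hyp w) (hyp v)))"
      using lower by (intro INF_greatest) simp
  qed
  then show ?thesis unfolding q_def .
qed

lemma perp_facts:
  assumes v: "v \<noteq> 0" and x: "x \<noteq> 0" and xv: "x \<bullet> v = 0"
  shows "x \<bullet> perp (sgn v) \<noteq> 0" "\<And>w. x \<bullet> w = (x \<bullet> perp (sgn v)) * (w \<bullet> perp (sgn v))"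
proof -
  define e where "e = sgn v"
  have ne: "norm e = 1" unfolding e_def using v by (simp add: norm_sgn)
  have nv: "norm v > 0" using v by simp
  have xe: "x \<bullet> e = 0" using xv inner_sgn_v[of x v] nv unfolding e_def by simp
  show xw: "x \<bullet> w = (x \<bullet> perp (sgn v)) * (w \<bullet> perp (sgn v))" for w
    using decomp[OF ne, of x w] xe unfolding e_def by simp
  show "x \<bullet> perp (sgn v) \<noteq> 0"
  proof
    assume "x \<bullet> perp (sgn v) = 0"
    then have "x \<bullet> x = 0" using xw[of x] by simp
    then show False using x by simp
  qed
qed

lemma LDM_perp_eq:
  assumes v: "v \<noteq> 0" and x1: "x1 \<noteq> 0" and x2: "x2 \<noteq> 0" and e1: "x1 \<bullet> v = 0" and e2: "x2 \<bullet> v = 0"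
  shows "LDM (hyp v) x1 = LDM (hyp v) x2"
proof -
  have S: "{w. hyp w x \<noteq> hyp v x} = {w. w \<bullet> perp (sgn v) \<noteq> 0}"
    if xx: "x \<noteq> 0" "x \<bullet> v = 0" for x
  proof (rule Collect_cong)
    fix w
    have pf: "x \<bullet> perp (sgn v) \<noteq> 0" "x \<bullet> w = (x \<bullet> perp (sgn v)) * (w \<bullet> perp (sgn v))"
      using perp_facts(1)[OF v xx] perp_facts(2)[OF v xx, of w] by - 
    have "hyp w x \<noteq> hyp v x \<longleftrightarrow> x \<bullet> w \<noteq> 0" unfolding hyp_def using xx(2) by (simp add: sgn_eq_0_iff)
    also have "\<dots> \<longleftrightarrow> w \<bullet> perp (sgn v) \<noteq> 0" unfolding pf(2) using pf(1) by simp
    finally show "hyp w x \<noteq> hyp v x \<longleftrightarrow> w \<bullet> perp (sgn v) \<noteq> 0" .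
  qed
  have "{w. hyp w x1 \<noteq> hyp v x1} = {w. hyp w x2 \<noteq> hyp v x2}"
    unfolding S[OF x1 e1] S[OF x2 e2] ..
  then show ?thesis unfolding LDM_unf by simp
qed

lemma LDM_perp_lt:
  assumes v: "v \<noteq> 0" and x: "x \<noteq> 0" and xv: "x \<bullet> v = 0" and yv: "y \<bullet> v \<noteq> 0"
  shows "LDM (hyp v) x < LDM (hyp v) y"
proof -
  have y: "y \<noteq> 0" using yv by auto
  define e where "e = sgn v"
  define p where "p = perp e"
  define q where "q = qv v y"
  have ne: "norm e = 1" unfolding e_def using v by (simp add: norm_sgn)
  have np: "norm p = 1" unfolding p_def using ne by (simp add: perp_norm)
  have nv: "norm v > 0" using v by simp
  have ny: "norm y > 0" using y by simp
  have wv: "w \<bullet> v = norm v * (w \<bullet> e)" for w unfolding e_def by (rule inner_sgn_v)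
  have nq: "norm q = 1" and qe: "q \<bullet> e = \<bar>y \<bullet> p\<bar> / norm y"
    using qv_props[OF v y] unfolding q_def e_def p_def by auto
  have ye: "y \<bullet> e \<noteq> 0" using yv wv[of y] by auto
  have yy: "(norm y)^2 = (y \<bullet> e)^2 + (y \<bullet> p)^2"
  proof -
    have "(norm y)^2 = y \<bullet> y" by (rule power2_norm_eq_inner)
    also have "\<dots> = (y \<bullet> e) * (y \<bullet> e) + (y \<bullet> p) * (y \<bullet> p)" using decomp[OF ne, of y y] unfolding p_def by simp
    finally show ?thesis by (simp add: power2_eq_square)
  qed
  have "\<bar>y \<bullet> p\<bar>^2 < (norm y)^2" using yy ye by simp
  then have "\<bar>y \<bullet> p\<bar> < norm y" by (rule power2_less_imp_less) simp
  then have t1: "q \<bullet> e < 1" unfolding qe using ny by simp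
  have t0: "q \<bullet> e \<ge> 0" unfolding qe by simp
  define c where "c = (1 + q \<bullet> e) / 2"
  define s where "s = sqrt (1 - c^2)"
  have c0: "0 < c" "c < 1" "q \<bullet> e < c" unfolding c_def using t0 t1 by auto
  have "c^2 < 1" using c0 by (simp add: power_less_one_iff abs_less_iff)
  then have s0: "s > 0" unfolding s_def by simp
  have ss: "s^2 = 1 - c^2" unfolding s_def using \<open>c^2 < 1\<close> by simp
  define w where "w = c *\<^sub>R e + s *\<^sub>R p"
  have pe: "p \<bullet> e = 0" "e \<bullet> p = 0" unfolding p_def by simp_all
  have we: "w \<bullet> e = c" unfolding w_def using ee[OF ne] pe by (simp add: inner_add_left)
  have wp: "w \<bullet> p = s" unfolding w_def using ee[OF np] pe by (simp add: inner_add_left)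
  have "w \<bullet> w = c * c + s * s" using decomp[OF ne, of w w] we wp unfolding p_def by simp
  then have "w \<bullet> w = 1" using ss by (simp add: power2_eq_square)
  then have nw: "norm w = 1" by (simp add: norm_eq_sqrt_inner)
  have xp: "x \<bullet> p \<noteq> 0" using perp_facts(1)[OF v x xv] unfolding p_def e_def .
  have xw: "x \<bullet> w = (x \<bullet> p) * (w \<bullet> p)" using perp_facts(2)[OF v x xv, of w] unfolding p_def e_def .
  have "x \<bullet> w \<noteq> 0" unfolding xw wp using xp s0 by simp
  then have feas: "w \<in> {w. hyp w x \<noteq> hyp v x}"
    using xv unfolding hyp_def by (simp add: sgn_eq_0_iff)
  have "LDM (hyp v) x \<le> ereal (rho (hyp w) (hyp v))"
    unfolding LDM_unf using feas by (rule INF_lower)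
  also have "q \<bullet> v < w \<bullet> v" unfolding wv we using c0 nv by simp
  then have "rho (hyp w) (hyp v) < rho (hyp q) (hyp v)" by (rule rho_cmp[OF v nq nw])
  then have "ereal (rho (hyp w) (hyp v)) < ereal (rho (hyp q) (hyp v))" by simp
  also have "\<dots> = LDM (hyp v) y" unfolding q_def using LDM_gen[OF v yv] by simp
  finally show ?thesis .
qed

lemma LDM_v0:
  assumes x: "x \<noteq> 0"
  shows "LDM (hyp 0) x = 1"
proof -
  have S: "{w. hyp w x \<noteq> hyp 0 x} = {w. x \<bullet> w \<noteq> 0}" unfolding hyp_def by (auto simp: sgn_eq_0_iff)
  have r: "rho (hyp w) (hyp 0) = 1" if "x \<bullet> w \<noteq> 0" for w
    using that by (intro rho_line(1)) auto
  have xin: "x \<in> {w. x \<bullet> w \<noteq> 0}" using x by simp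
  have "(INF w\<in>{w. x \<bullet> w \<noteq> 0}. ereal (rho (hyp w) (hyp 0))) = (INF w\<in>{w. x \<bullet> w \<noteq> 0}. ereal 1)"
    using r by (intro INF_cong) auto
  also have "\<dots> = 1" using xin by (simp add: INF_constant one_ereal_def) 
  finally show ?thesis unfolding LDM_unf S .
qed

lemma KB:
  assumes v: "v \<noteq> 0" and xv: "x \<bullet> v \<noteq> 0"
  shows "(uvec v x \<bullet> v)^2 + (qv v x \<bullet> v)^2 = (norm v)^2" "uvec v x \<bullet> v \<ge> 0" "qv v x \<bullet> v \<ge> 0"
proof -
  have x: "x \<noteq> 0" using xv by auto
  define e where "e = sgn v"
  define p where "p = perp e"
  have ne: "norm e = 1" unfolding e_def using v by (simp add: norm_sgn)
  have nx: "norm x > 0" using x by simp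
  have K: "uvec v x \<bullet> v = \<bar>x \<bullet> v\<bar> / norm x" by (rule uvec_props(2)[OF xv])
  have xv': "x \<bullet> v = norm v * (x \<bullet> e)" unfolding e_def by (rule inner_sgn_v)
  have B: "qv v x \<bullet> v = norm v * (\<bar>x \<bullet> p\<bar> / norm x)"
    using inner_sgn_v[of "qv v x" v] qv_props(3)[OF v x] unfolding p_def e_def by simp
  have xx: "(norm x)^2 = (x \<bullet> e)^2 + (x \<bullet> p)^2"
  proof -
    have "(norm x)^2 = x \<bullet> x" by (rule power2_norm_eq_inner)
    also have "\<dots> = (x \<bullet> e) * (x \<bullet> e) + (x \<bullet> p) * (x \<bullet> p)" using decomp[OF ne, of x x] unfolding p_def by simp
    finally show ?thesis by (simp add: power2_eq_square)
  qed
  have "(uvec v x \<bullet> v)^2 + (qv v x \<bullet> v)^2 = (norm v)^2 * (((x \<bullet> e)^2 + (x \<bullet> p)^2) / (norm x)^2)"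
    unfolding K B xv' by (simp add: power_mult_distrib power_divide abs_mult add_divide_distrib algebra_simps)
  also have "\<dots> = (norm v)^2" unfolding xx[symmetric] using nx by simp
  finally show "(uvec v x \<bullet> v)^2 + (qv v x \<bullet> v)^2 = (norm v)^2" .
  show "uvec v x \<bullet> v \<ge> 0" unfolding K by simp
  show "qv v x \<bullet> v \<ge> 0" unfolding B by simp
qed

lemma gen_cmp:
  assumes sp: "\<sigma> > 0" and v: "v \<noteq> 0" and x1: "x1 \<bullet> v \<noteq> 0" and x2: "x2 \<bullet> v \<noteq> 0"
  shows "LDM (hyp v) x1 < LDM (hyp v) x2 \<longleftrightarrow> mis_prob v \<sigma> x1 > mis_prob v \<sigma> x2"
proof -
  define u1 where "u1 = uvec v x1"
  define u2 where "u2 = uvec v x2"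
  define q1 where "q1 = qv v x1"
  define q2 where "q2 = qv v x2"
  have y1: "x1 \<noteq> 0" using x1 by auto
  have y2: "x2 \<noteq> 0" using x2 by auto
  have nu1: "norm u1 = 1" unfolding u1_def by (rule uvec_props(1)[OF x1])
  have nu2: "norm u2 = 1" unfolding u2_def by (rule uvec_props(1)[OF x2])
  have nq1: "norm q1 = 1" unfolding q1_def by (rule qv_props(1)[OF v y1])
  have nq2: "norm q2 = 1" unfolding q2_def by (rule qv_props(1)[OF v y2])
  have L1: "LDM (hyp v) x1 = ereal (rho (hyp q1) (hyp v))" unfolding q1_def by (rule LDM_gen[OF v x1])
  have L2: "LDM (hyp v) x2 = ereal (rho (hyp q2) (hyp v))" unfolding q2_def by (rule LDM_gen[OF v x2])
  have M1: "mis_prob v \<sigma> x1 = measure (gauss2 v \<sigma>) {w. u1 \<bullet> w \<le> 0}" unfolding u1_def by (rule mis_gen[OF x1])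
  have M2: "mis_prob v \<sigma> x2 = measure (gauss2 v \<sigma>) {w. u2 \<bullet> w \<le> 0}" unfolding u2_def by (rule mis_gen[OF x2])
  have S: "u1 \<bullet> v < u2 \<bullet> v \<longleftrightarrow> q2 \<bullet> v < q1 \<bullet> v" "u1 \<bullet> v = u2 \<bullet> v \<longleftrightarrow> q1 \<bullet> v = q2 \<bullet> v"
    using sqcmp[of "u1 \<bullet> v" "u2 \<bullet> v" "q1 \<bullet> v" "q2 \<bullet> v"] KB[OF v x1] KB[OF v x2]
    unfolding u1_def u2_def q1_def q2_def by auto
  consider "u1 \<bullet> v < u2 \<bullet> v" | "u1 \<bullet> v = u2 \<bullet> v" | "u2 \<bullet> v < u1 \<bullet> v" by linarith
  then show ?thesis
  proof cases
    case 1
    then have "q2 \<bullet> v < q1 \<bullet> v" using S by simp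
    then have a: "rho (hyp q1) (hyp v) < rho (hyp q2) (hyp v)" by (rule rho_cmp[OF v nq2 nq1])
    have b: "measure (gauss2 v \<sigma>) {w. u2 \<bullet> w \<le> 0} < measure (gauss2 v \<sigma>) {w. u1 \<bullet> w \<le> 0}"
      by (rule H_mono[OF sp nu1 nu2 1])
    show ?thesis unfolding L1 L2 M1 M2 using a b by simp
  next
    case 2
    then have "q1 \<bullet> v = q2 \<bullet> v" using S by simp
    then have a: "rho (hyp q2) (hyp v) = rho (hyp q1) (hyp v)" by (rule rho_eqv[OF v nq1 nq2])
    have b: "measure (gauss2 v \<sigma>) {w. u2 \<bullet> w \<le> 0} = measure (gauss2 v \<sigma>) {w. u1 \<bullet> w \<le> 0}"
      by (rule H_eq[OF nu1 nu2 2])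
    show ?thesis unfolding L1 L2 M1 M2 using a b by simp
  next
    case 3
    then have "q1 \<bullet> v < q2 \<bullet> v" using S(1)[of] sqcmp[of "u2 \<bullet> v" "u1 \<bullet> v" "q2 \<bullet> v" "q1 \<bullet> v"] KB[OF v x1] KB[OF v x2]
      unfolding u1_def u2_def q1_def q2_def by auto
    then have a: "rho (hyp q2) (hyp v) < rho (hyp q1) (hyp v)" by (rule rho_cmp[OF v nq1 nq2])
    have b: "measure (gauss2 v \<sigma>) {w. u1 \<bullet> w \<le> 0} < measure (gauss2 v \<sigma>) {w. u2 \<bullet> w \<le> 0}"
      by (rule H_mono[OF sp nu2 nu1 3])
    show ?thesis unfolding L1 L2 M1 M2 using a b by simp
  qed
qed

theorem proposition1:
  fixes v x1 x2 :: "real^2" and \<sigma> :: real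
  assumes "\<sigma> > 0" and "x1 \<in> disk" and "x2 \<in> disk"
  shows "LDM (hyp v) x1 < LDM (hyp v) x2 \<longleftrightarrow> mis_prob v \<sigma> x1 > mis_prob v \<sigma> x2"
proof (cases "v = 0")
  case True
  have LD: "LDM (hyp v) x = (if x = 0 then \<infinity> else 1)" for x
    using True LDM_0[of v] LDM_v0[of x] by auto
  have MP: "mis_prob v \<sigma> x = (if x = 0 then 0 else 1)" for x
    using True mis_zero[of v \<sigma>] mis_line[OF assms(1), of x v] by auto
  show ?thesis unfolding LD MP by auto
next
  case False
  note v = False
  note sp = assms(1)
  have fin: "LDM (hyp v) x < \<infinity>" if "x \<noteq> 0" for x
  proof (cases "x \<bullet> v = 0")
    case True
    have vv: "v \<bullet> v \<noteq> 0" using v by simp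
    have "LDM (hyp v) x < LDM (hyp v) v" by (rule LDM_perp_lt[OF v that True vv])
    also have "\<dots> < \<infinity>" using LDM_gen[OF v vv] by simp
    finally show ?thesis .
  next
    case False
    then show ?thesis using LDM_gen[OF v False] by simp
  qed
  have mgen: "0 < mis_prob v \<sigma> x \<and> mis_prob v \<sigma> x < 1" if "x \<bullet> v \<noteq> 0" for x
  proof -
    have "uvec v x \<bullet> v > 0"
    proof -
      have "x \<noteq> 0" using that by auto
      then have "norm x > 0" by simp
      moreover have "\<bar>x \<bullet> v\<bar> > 0" using that by simp
      ultimately show ?thesis using uvec_props(2)[OF that] by simp
    qed
    then show ?thesis using mis_gen[OF that] H_bounds[OF sp uvec_props(1)[OF that]] by simp
  qed
  consider "x1 = 0" | "x1 \<noteq> 0" "x1 \<bullet> v = 0" | "x1 \<bullet> v \<noteq> 0" by auto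
  then show ?thesis
  proof cases
    case 1
    then have l1: "LDM (hyp v) x1 = \<infinity>" and m1: "mis_prob v \<sigma> x1 = 0" by (simp_all add: LDM_0 mis_zero)
    consider "x2 = 0" | "x2 \<noteq> 0" "x2 \<bullet> v = 0" | "x2 \<bullet> v \<noteq> 0" by auto
    then show ?thesis
    proof cases
      case 1 then show ?thesis using l1 m1 by (simp add: LDM_0 mis_zero)
    next
      case 2 then show ?thesis using l1 m1 fin[of x2] mis_line[OF sp, of x2 v] by simp
    next
      case 3
      then have "x2 \<noteq> 0" by auto
      then show ?thesis using l1 m1 fin[of x2] mgen[OF 3] by simp
    qed
  next
    case 2
    then have m1: "mis_prob v \<sigma> x1 = 1" using mis_line[OF sp] by simp
    have f1: "LDM (hyp v) x1 < \<infinity>" using fin 2 by simp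
    consider "x2 = 0" | "x2 \<noteq> 0" "x2 \<bullet> v = 0" | "x2 \<bullet> v \<noteq> 0" by auto
    then show ?thesis
    proof cases
      case 1 then show ?thesis using f1 m1 by (simp add: LDM_0 mis_zero)
    next
      case b: 2
      then have "mis_prob v \<sigma> x2 = 1" using mis_line[OF sp] by simp
      then show ?thesis using m1 LDM_perp_eq[OF v 2(1) b(1) 2(2) b(2)] by simp
    next
      case 3
      then show ?thesis using m1 LDM_perp_lt[OF v 2(1) 2(2) 3] mgen[OF 3] by simp
    qed
  next
    case 3
    have x1n: "x1 \<noteq> 0" using 3 by auto
    have f1: "LDM (hyp v) x1 < \<infinity>" using fin x1n by simp
    consider "x2 = 0" | "x2 \<noteq> 0" "x2 \<bullet> v = 0" | "x2 \<bullet> v \<noteq> 0" by auto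
    then show ?thesis
    proof cases
      case 1 then show ?thesis using f1 mgen[OF 3] by (simp add: LDM_0 mis_zero)
    next
      case 2
      have "LDM (hyp v) x2 < LDM (hyp v) x1" by (rule LDM_perp_lt[OF v 2(1) 2(2) 3])
      moreover have "mis_prob v \<sigma> x2 = 1" using 2 mis_line[OF sp] by simp
      ultimately show ?thesis using mgen[OF 3] by simp
    next
      case b: 3
      show ?thesis by (rule gen_cmp[OF sp v 3 b])
    qed
  qed
qed

end
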